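(* Let $\mathcal{V}$ be a finite vocabulary, fix a decoding context $c$, let $P(\cdot\mid c)$ be the base next-token distribution on $\mathcal{V}$, and let $t_1 := \arg\max_{t} P(t\mid c)$ be the base model's top token. Let $\mathcal{V}$ be partitioned into $n \ge 1$ buckets and let the required bucket be drawn uniformly at random from the $n$ buckets; let $t^\star$ denote the highest-$P(\cdot\mid c)$-probability token in the required bucket. For each possible required bucket, let $Q(\cdot\mid c)$ be any probability distribution on $\mathcal{V}$ satisfying $Q(t^\star\mid c) \ge Q(t\mid c)$ for all $t\in\mathcal{V}$ (so $t^\star$ is an argmax of $Q$). Define the per-token perplexity \[ \mathrm{PPL}(Q) := \exp\Bigl(\mathbb{E}\bigl[-\log Q(t_1\mid c)\bigr]\Bigr), \] where the expectation is over the uniformly random required bucket. Then \[ \mathrm{PPL}(Q) \;\ge\; 2^{(n-1)/n}. \]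
   Context: Logarithms are natural. The channel carries $\log_2 n$ bits per token; perplexity of the steganographic distribution $Q$ is evaluated on the base model's top token $t_1$. *)

theory Defs
  imports Complex_Main "HOL-Library.Extended_Real"
begin

(* Convention: - ln 0 = +infinity, so PPL = +infinity if some Q b t1 = 0. *)
definition PPL :: "nat \<Rightarrow> (nat \<Rightarrow> 'v \<Rightarrow> real) \<Rightarrow> 'v \<Rightarrow> ereal" where
  "PPL n Q t1 = (if \<exists>b<n. Q b t1 = 0 then \<infinity>
                 else ereal (exp ((\<Sum>b<n. - ln (Q b t1)) / real n)))"

end

theory Submission
  imports Defs
begin

theorem theorem7p2:
  fixes P :: "'v::finite \<Rightarrow> real"
    and t1 :: 'v
    and n :: nat
    and bucket :: "'v \<Rightarrow> nat"
    and tstar :: "nat \<Rightarrow> 'v"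
    and Q :: "nat \<Rightarrow> 'v \<Rightarrow> real"
  assumes P_nonneg: "\<And>t. P t \<ge> 0"
    and P_sum: "(\<Sum>t\<in>UNIV. P t) = 1"
    and t1_top: "\<And>t. P t \<le> P t1"
    and n_pos: "n \<ge> 1"
    and bucket_range: "\<And>t. bucket t < n"
    and bucket_nonempty: "\<And>b. b < n \<Longrightarrow> \<exists>t. bucket t = b"
    and tstar_in: "\<And>b. b < n \<Longrightarrow> bucket (tstar b) = b"
    and tstar_max: "\<And>b t. b < n \<Longrightarrow> bucket t = b \<Longrightarrow> P t \<le> P (tstar b)"
    and Q_nonneg: "\<And>b t. b < n \<Longrightarrow> Q b t \<ge> 0"
    and Q_sum: "\<And>b. b < n \<Longrightarrow> (\<Sum>t\<in>UNIV. Q b t) = 1"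
    and Q_argmax: "\<And>b t. b < n \<Longrightarrow> Q b t \<le> Q b (tstar b)"
  shows "PPL n Q t1 \<ge> ereal (2 powr ((real n - 1) / real n))"
proof (cases "\<exists>b<n. Q b t1 = 0")
  case True
  then show ?thesis by (simp add: PPL_def)
next
  case False
  define b1 where "b1 = bucket t1"
  have b1n: "b1 < n" using bucket_range b1_def by simp
  have pos: "Q b t1 > 0" if "b < n" for b
    using False Q_nonneg[OF that, of t1] that by force
  have le1: "Q b t1 \<le> 1" if "b < n" for b
  proof -
    have "sum (Q b) {t1} \<le> sum (Q b) UNIV"
      by (rule sum_mono2) (auto simp: Q_nonneg that)
    then show ?thesis using Q_sum[OF that] by simp
  qed
  have half: "Q b t1 \<le> 1/2" if "b < n" "b \<noteq> b1" for b
  proof -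
    have ne: "tstar b \<noteq> t1" using tstar_in[OF that(1)] that(2) b1_def by auto
    have "sum (Q b) {t1, tstar b} \<le> sum (Q b) UNIV"
      by (rule sum_mono2) (auto simp: Q_nonneg that)
    then have "Q b t1 + Q b (tstar b) \<le> 1" using Q_sum[OF that(1)] ne by simp
    then show ?thesis using Q_argmax[OF that(1), of t1] by simp
  qed
  have t_b1: "- ln (Q b1 t1) \<ge> 0" using le1[OF b1n] pos[OF b1n] by simp
  have t_oth: "- ln (Q b t1) \<ge> ln 2" if "b \<in> {..<n} - {b1}" for b
  proof -
    have "ln (Q b t1) \<le> ln (1/2)" using half[of b] pos[of b] that by simp
    then show ?thesis by (simp add: ln_div)
  qed
  have S: "(\<Sum>b<n. - ln (Q b t1)) = (\<Sum>b\<in>{..<n} - {b1}. - ln (Q b t1)) + - ln (Q b1 t1)"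
    using b1n by (simp add: sum_diff1)
  have "(\<Sum>b\<in>{..<n} - {b1}. - ln (Q b t1)) \<ge> (\<Sum>b\<in>{..<n} - {b1}. ln 2)"
    by (rule sum_mono) (rule t_oth)
  also have "(\<Sum>b\<in>{..<n} - {b1}. ln (2::real)) = real (n - 1) * ln 2"
    using b1n by simp
  finally have "(\<Sum>b<n. - ln (Q b t1)) \<ge> (real n - 1) * ln 2"
    using S t_b1 n_pos by (simp add: of_nat_diff)
  then have "(\<Sum>b<n. - ln (Q b t1)) / real n \<ge> ((real n - 1) / real n) * ln 2"
    using n_pos by (simp add: divide_right_mono)
  then have E: "exp ((\<Sum>b<n. - ln (Q b t1)) / real n) \<ge> exp (((real n - 1) / real n) * ln 2)"
    by (simp only: exp_le_cancel_iff)
  have F: "exp (((real n - 1) / real n) * ln 2) = 2 powr ((real n - 1) / real n)"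
    by (simp add: powr_def mult.commute)
  have "2 powr ((real n - 1) / real n) \<le> exp ((\<Sum>b<n. - ln (Q b t1)) / real n)"
    using E F by linarith
  then show ?thesis using False by (simp add: PPL_def)
qed

end
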